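(* Let $d,K,n$ be positive integers with $K\ge 2$. For $\tau>0$ define $\mathcal L_0(\mathbf W,\mathbf H,\tau)=\tau\log\sum_{i=1}^n\sum_{k=1}^K\mathcal L_{\mathrm{CE}}(\mathbf W^\top\mathbf h_{k,i},\mathbf y_k,\tau)$, and let $\mathcal{WH}^-=\{(\mathbf W,\mathbf H)\in\mathrm{OB}(d,K)\times\mathrm{OB}(d,nK):(\mathbf w_{k'}-\mathbf w_k)^\top\mathbf h_{k,i}\le0\ \forall i\in[n],k\in[K],k'\in[K]\setminus\{k\}\}$. Then $\mathcal L_0(\cdot,\cdot,\tau)$ converges uniformly to $\mathcal L_{\mathrm{HardMax}}$ on $\mathcal{WH}^-$ as $\tau\to0$.
   Context: $\mathrm{OB}(d,m)$ is the set of real $d\times m$ matrices with unit-norm columns; $\mathbf W$ has columns $\mathbf w_k$, $\mathbf H$ has columns $\mathbf h_{k,i}$. $\mathbf y_k$ is the $k$-th standard basis vector of $\mathbb R^K$; $\mathcal L_{\mathrm{CE}}(\mathbf z,\mathbf y_k,\tau)=-\log\big(\exp(z_k/\tau)/\sum_{j=1}^K\exp(z_j/\tau)\big)$. $\mathcal L_{\mathrm{HardMax}}(\mathbf W,\mathbf H)=\max_k\max_i\max_{k'\ne k}\langle\mathbf w_{k'}-\mathbf w_k,\mathbf h_{k,i}\rangle$. *)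

theory Defs
  imports "HOL-Analysis.Analysis"
begin

text \<open>Classes are indexed by k < K (0-based), samples by i < n.
  W is represented by its columns w k, H by its columns h k i, all in real^'d.\<close>

definition CE :: "nat \<Rightarrow> (nat \<Rightarrow> real) \<Rightarrow> nat \<Rightarrow> real \<Rightarrow> real" where
  "CE K z k \<tau> = - ln (exp (z k / \<tau>) / (\<Sum>j<K. exp (z j / \<tau>)))"

definition L0 :: "nat \<Rightarrow> nat \<Rightarrow> (nat \<Rightarrow> real^'d) \<Rightarrow> (nat \<Rightarrow> nat \<Rightarrow> real^'d) \<Rightarrow> real \<Rightarrow> real" where
  "L0 K n w h \<tau> = \<tau> * ln (\<Sum>i<n. \<Sum>k<K. CE K (\<lambda>j. w j \<bullet> h k i) k \<tau>)"

definition HardMax :: "nat \<Rightarrow> nat \<Rightarrow> (nat \<Rightarrow> real^'d) \<Rightarrow> (nat \<Rightarrow> nat \<Rightarrow> real^'d) \<Rightarrow> real" where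
  "HardMax K n w h = Max {(w k' - w k) \<bullet> h k i | k i k'. k < K \<and> i < n \<and> k' < K \<and> k' \<noteq> k}"

definition WHminus :: "nat \<Rightarrow> nat \<Rightarrow> ((nat \<Rightarrow> real^'d) \<times> (nat \<Rightarrow> nat \<Rightarrow> real^'d)) set" where
  "WHminus K n = {(w, h). (\<forall>k<K. norm (w k) = 1) \<and> (\<forall>k<K. \<forall>i<n. norm (h k i) = 1) \<and>
     (\<forall>i<n. \<forall>k<K. \<forall>k'<K. k' \<noteq> k \<longrightarrow> (w k' - w k) \<bullet> h k i \<le> 0)}"

end

theory Submission
  imports Defs
begin

lemma CE_alt:
  assumes "\<tau> > 0"
  shows "CE K z k \<tau> = ln (\<Sum>j<K. exp ((z j - z k) / \<tau>))"
proof -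
  have e: "(\<Sum>j<K. exp ((z j - z k) / \<tau>)) = (\<Sum>j<K. exp (z j / \<tau>)) / exp (z k / \<tau>)"
    by (simp add: sum_divide_distrib diff_divide_distrib exp_diff)
  show ?thesis unfolding CE_def e
    by (simp add: ln_div sum_pos)
qed

lemma ln_lower: fixes x :: real assumes "0 \<le> x" "x \<le> 1" shows "x / 2 \<le> ln (1 + x)"
proof -
  have "ln (1/(1+x)) \<le> 1/(1+x) - 1" using assms ln_le_minus_one[of "1/(1+x)"] by simp
  hence "- ln (1+x) \<le> 1/(1+x) - 1" using assms by (simp add: ln_div)
  moreover have "1/(1+x) - 1 = - x/(1+x)" using assms by (simp add: field_simps)
  moreover have "x/2 \<le> x/(1+x)" using assms by (intro divide_left_mono) auto
  ultimately show ?thesis by linarith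
qed

lemma main_bound:
  fixes K n :: nat and w :: "nat \<Rightarrow> real^'d" and h :: "nat \<Rightarrow> nat \<Rightarrow> real^'d"
  assumes K: "K \<ge> 2" and n: "n \<ge> 1" and wh: "(w, h) \<in> WHminus K n" and tau: "\<tau> > 0"
  shows "\<bar>L0 K n w h \<tau> - HardMax K n w h\<bar> \<le> \<tau> * (ln 2 + ln (real (n*K*K)))"
proof -
  define a where "a k i j = (w j - w k) \<bullet> h k i" for k i j
  define A where "A = {(w k' - w k) \<bullet> h k i | k i k'. k < K \<and> i < n \<and> k' < K \<and> k' \<noteq> k}"
  define M where "M = HardMax K n w h"
  have MA: "M = Max A" unfolding M_def HardMax_def A_def by simp
  have "A \<subseteq> (\<lambda>(k,i,k'). (w k' - w k) \<bullet> h k i) ` ({..<K} \<times> {..<n} \<times> {..<K})"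
    unfolding A_def by force
  hence finA: "finite A" by (rule finite_subset) auto
  have "a 0 0 1 \<in> A" unfolding A_def a_def using K n by force
  hence neA: "A \<noteq> {}" by auto
  have aleM: "a k i j \<le> M" if "k < K" "i < n" "j < K" "j \<noteq> k" for k i j
    unfolding MA using that finA by (intro Max_ge) (auto simp: A_def a_def)
  have "M \<in> A" unfolding MA using finA neA by simp
  then obtain k0 i0 j0 where k0: "k0 < K" "i0 < n" "j0 < K" "j0 \<noteq> k0" and Meq: "M = a k0 i0 j0"
    unfolding A_def a_def by blast
  define T where "T k i = (\<Sum>j<K. exp (a k i j / \<tau>))" for k i
  define S where "S = (\<Sum>i<n. \<Sum>k<K. ln (T k i))"
  have L0eq: "L0 K n w h \<tau> = \<tau> * ln S"
    unfolding L0_def S_def T_def a_def using tau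
    by (simp add: CE_alt inner_diff_left)
  have Tsplit: "T k i = 1 + (\<Sum>j\<in>{..<K}-{k}. exp (a k i j / \<tau>))" if "k < K" for k i
  proof -
    have "T k i = exp (a k i k / \<tau>) + (\<Sum>j\<in>{..<K}-{k}. exp (a k i j / \<tau>))"
      unfolding T_def using that by (subst sum.remove[of _ k]) auto
    moreover have "a k i k = 0" unfolding a_def by simp
    ultimately show ?thesis by simp
  qed
  have T1: "T k i \<ge> 1" if "k < K" for k i
  proof -
    have "0 \<le> (\<Sum>j\<in>{..<K}-{k}. exp (a k i j / \<tau>))" by (intro sum_nonneg) simp
    thus ?thesis using Tsplit[OF that, of i] by linarith
  qed
  have lnT0: "ln (T k i) \<ge> 0" if "k < K" for k i using T1[OF that] by (intro ln_ge_zero) simp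
  have Tup: "ln (T k i) \<le> K * exp (M / \<tau>)" if "k < K" "i < n" for k i
  proof -
    have "ln (T k i) \<le> T k i - 1" using T1[OF that(1), of i] ln_le_minus_one[of "T k i"] by linarith
    also have "\<dots> = (\<Sum>j\<in>{..<K}-{k}. exp (a k i j / \<tau>))" using Tsplit[OF that(1)] by simp
    also have "\<dots> \<le> (\<Sum>j\<in>{..<K}-{k}. exp (M / \<tau>))"
      using aleM that tau by (intro sum_mono) (auto simp: divide_right_mono)
    also have "\<dots> \<le> K * exp (M / \<tau>)" using that by simp
    finally show ?thesis .
  qed
  have Sup: "S \<le> n * K * K * exp (M / \<tau>)"
  proof -
    have "S \<le> (\<Sum>i<n. \<Sum>k<K. K * exp (M / \<tau>))"
      unfolding S_def using Tup by (intro sum_mono) auto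
    thus ?thesis by simp
  qed
  have "exp (M / \<tau>) \<le> (\<Sum>j\<in>{..<K}-{k0}. exp (a k0 i0 j / \<tau>))"
    unfolding Meq using k0 by (intro member_le_sum) auto
  hence "T k0 i0 \<ge> 1 + exp (M / \<tau>)" using Tsplit[OF k0(1)] by simp
  moreover have "exp (M / \<tau>) \<le> 1"
  proof -
    have "a k0 i0 j0 \<le> 0" using wh k0 unfolding WHminus_def a_def by auto
    thus ?thesis using Meq tau by (simp add: divide_nonpos_pos)
  qed
  ultimately have "exp (M / \<tau>) / 2 \<le> ln (T k0 i0)"
  proof -
    assume A: "1 + exp (M / \<tau>) \<le> T k0 i0" and B: "exp (M / \<tau>) \<le> 1"
    have "exp (M / \<tau>) / 2 \<le> ln (1 + exp (M / \<tau>))" using B by (intro ln_lower) auto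
    also have "\<dots> \<le> ln (T k0 i0)" using A T1[OF k0(1), of i0] by (subst ln_le_cancel_iff) (auto intro: add_pos_pos)
    finally show ?thesis .
  qed
  also have "ln (T k0 i0) \<le> (\<Sum>k<K. ln (T k i0))"
    using k0 lnT0 by (intro member_le_sum) auto
  also have "\<dots> \<le> S" unfolding S_def using k0 lnT0
    by (intro member_le_sum[where f="\<lambda>i. \<Sum>k<K. ln (T k i)"] sum_nonneg) auto
  finally have Slow: "exp (M / \<tau>) / 2 \<le> S" .
  have "exp (M / \<tau>) / 2 > 0" by simp
  hence Spos: "S > 0" using Slow by linarith
  have "ln S \<ge> ln (exp (M / \<tau>) / 2)" using Slow by (simp add: Spos)
  hence lo: "ln S \<ge> M / \<tau> - ln 2" by (simp add: ln_div)
  have npos: "real (n*K*K) > 0" using K n by simp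
  have "ln S \<le> ln (n * K * K * exp (M / \<tau>))" using Sup Spos by simp
  also have "ln (n * K * K * exp (M / \<tau>)) = ln (real (n*K*K)) + M / \<tau>"
    using npos by (subst ln_mult) auto
  finally have hi: "ln S \<le> ln (real (n*K*K)) + M / \<tau>" .
  have "\<tau> * ln S \<ge> \<tau> * (M / \<tau> - ln 2)" using lo tau by (simp add: mult_left_mono)
  hence lo2: "\<tau> * ln S \<ge> M - \<tau> * ln 2" using tau by (simp add: algebra_simps)
  have "\<tau> * ln S \<le> \<tau> * (ln (real (n*K*K)) + M / \<tau>)" using hi tau by (simp add: mult_left_mono)
  hence hi2: "\<tau> * ln S \<le> M + \<tau> * ln (real (n*K*K))" using tau by (simp add: algebra_simps)
  have "1 \<le> n*K*K" using K n by (simp add: Suc_le_eq)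
  hence "ln (real (n*K*K)) \<ge> 0" by (intro ln_ge_zero) linarith
  moreover have "ln (2::real) \<ge> 0" by simp
  ultimately have "0 \<le> \<tau> * ln 2" "0 \<le> \<tau> * ln (real (n*K*K))" using tau by simp_all
  thus ?thesis unfolding L0eq M_def[symmetric] using lo2 hi2 by (simp add: abs_le_iff algebra_simps)
qed

theorem mainTheorem10:
  fixes K n :: nat
  assumes "K \<ge> 2" and "n \<ge> 1"
  shows "uniform_limit (WHminus K n :: ((nat \<Rightarrow> real^'d) \<times> (nat \<Rightarrow> nat \<Rightarrow> real^'d)) set)
           (\<lambda>\<tau> (w, h). L0 K n w h \<tau>) (\<lambda>(w, h). HardMax K n w h) (at_right 0)"
proof (rule uniform_limitI)
  fix e :: real assume e: "e > 0"
  define C where "C = ln 2 + ln (real (n*K*K)) + 1"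
  have "1 \<le> n*K*K" using assms by (simp add: Suc_le_eq)
  hence "ln (real (n*K*K)) \<ge> 0" by (intro ln_ge_zero) linarith
  hence C: "C > 0" unfolding C_def using ln_gt_zero[of "2::real"] by linarith
  have ev: "eventually (\<lambda>\<tau>. 0 < \<tau> \<and> \<tau> < e / C) (at_right (0::real))"
    using e C by (simp add: eventually_at_right_field) (metis divide_pos_pos)
  show "\<forall>\<^sub>F \<tau> in at_right 0. \<forall>x\<in>(WHminus K n :: ((nat \<Rightarrow> real^'d) \<times> (nat \<Rightarrow> nat \<Rightarrow> real^'d)) set).
          dist ((\<lambda>\<tau> (w, h). L0 K n w h \<tau>) \<tau> x) ((\<lambda>(w, h). HardMax K n w h) x) < e"
  proof (rule eventually_mono[OF ev], intro ballI)
    fix \<tau> :: real and x :: "(nat \<Rightarrow> real^'d) \<times> (nat \<Rightarrow> nat \<Rightarrow> real^'d)"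
    assume t: "0 < \<tau> \<and> \<tau> < e / C" and x: "x \<in> WHminus K n"
    obtain w h where xe: "x = (w, h)" by (cases x)
    have wh: "(w, h) \<in> WHminus K n" using x xe by simp
    have "\<bar>L0 K n w h \<tau> - HardMax K n w h\<bar> \<le> \<tau> * (ln 2 + ln (real (n*K*K)))"
      using main_bound[OF assms wh] t by simp
    also have "\<dots> < \<tau> * C" unfolding C_def using t by simp
    also have "\<dots> < e" using t C by (simp add: pos_less_divide_eq)
    finally show "dist ((\<lambda>\<tau> (w, h). L0 K n w h \<tau>) \<tau> x) ((\<lambda>(w, h). HardMax K n w h) x) < e"
      by (simp add: dist_real_def xe)
  qed
qed

end
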